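(* Let $\mathbb D$ be any nonempty set of database instances over the same schema. Then there exists a probabilistic database $\mathcal D\in\mathsf{FO}(\mathsf{TI})$ with $\mathrm{worlds}(\mathcal D)=\mathbb D$.
   Context: Fix a countably infinite universe $U$. A database schema is a finite nonempty set of relation symbols with arities; facts are $R(u_1,\dots,u_{\mathrm{ar}(R)})$ with $u_i\in U$; an instance is a finite set of facts; $\mathrm{adom}(D)$ is the set of elements of $U$ occurring in $D$. A probabilistic database (PDB) is a discrete probability space $(\mathbb D,P)$ with $\mathbb D$ a nonempty countable set of instances; $\mathrm{worlds}(\mathcal D)$ is the set of instances $D$ with $P(\{D\})>0$. A PDB $\mathcal I$ is tuple-independent if for all pairwise distinct facts $f_1,\dots,f_k$, $\Pr(f_1\in I,\dots,f_k\in I)=\prod_i\Pr(f_i\in I)$. An FO-view consists of one first-order formula $\Phi_R(x_1,\dots,x_{\mathrm{ar}(R)})$ per output relation symbol $R$, evaluated under active domain semantics (quantifiers range over $\mathrm{adom}(D)$ and the formula's constants), mapping $D$ to the instance containing $R(\bar a)$ for all $\bar a$ over $\mathrm{adom}(D)\cup\mathrm{adom}(\Phi_R)$ with $D\models\Phi_R[\bar a]$. The image of a PDB $(\mathbb D,P)$ under a view $V$ is the PDB on $V(\mathbb D)$ with $P'(\{D'\})=P(\{D:V(D)=D'\})$. $\mathsf{FO}(\mathsf{TI})$ is the class of images of tuple-independent PDBs under FO-views. *)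

theory Defs
  imports "HOL-Probability.Probability"
begin

text \<open>Universe U: the countably infinite type nat.
  A fact R(u_1,...,u_k) is the pair (R, [u_1,...,u_k]).\<close>

type_synonym fact = "nat \<times> nat list"

definition schema :: "nat set \<Rightarrow> bool" where
  "schema S \<longleftrightarrow> finite S \<and> S \<noteq> {}"

definition fact_over :: "nat set \<Rightarrow> (nat \<Rightarrow> nat) \<Rightarrow> fact \<Rightarrow> bool" where
  "fact_over S ar f \<longleftrightarrow> fst f \<in> S \<and> length (snd f) = ar (fst f)"

definition is_instance :: "nat set \<Rightarrow> (nat \<Rightarrow> nat) \<Rightarrow> fact set \<Rightarrow> bool" where
  "is_instance S ar D \<longleftrightarrow> finite D \<and> (\<forall>f\<in>D. fact_over S ar f)"

definition adom :: "fact set \<Rightarrow> nat set" where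
  "adom D = (\<Union>f\<in>D. set (snd f))"

definition PDB :: "nat set \<Rightarrow> (nat \<Rightarrow> nat) \<Rightarrow> fact set pmf \<Rightarrow> bool" where
  "PDB S ar P \<longleftrightarrow> (\<forall>D\<in>set_pmf P. is_instance S ar D)"

definition worlds :: "fact set pmf \<Rightarrow> fact set set" where
  "worlds P = set_pmf P"

definition tuple_independent :: "fact set pmf \<Rightarrow> bool" where
  "tuple_independent P \<longleftrightarrow>
     (\<forall>fs :: fact list. distinct fs \<longrightarrow>
        measure_pmf.prob P {I. \<forall>f\<in>set fs. f \<in> I} = (\<Prod>f\<leftarrow>fs. measure_pmf.prob P {I. f \<in> I}))"

definition TI_PDB :: "nat set \<Rightarrow> (nat \<Rightarrow> nat) \<Rightarrow> fact set pmf \<Rightarrow> bool" where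
  "TI_PDB S ar P \<longleftrightarrow> PDB S ar P \<and> tuple_independent P"

datatype fo_term = Var nat | Const nat

datatype fo = Atom nat "fo_term list" | Eq fo_term fo_term | TT | FF
  | Neg fo | Conj fo fo | Disj fo fo | Ex nat fo | All nat fo

fun term_val :: "(nat \<Rightarrow> nat) \<Rightarrow> fo_term \<Rightarrow> nat" where
  "term_val v (Var x) = v x"
| "term_val v (Const c) = c"

fun term_vars :: "fo_term \<Rightarrow> nat set" where
  "term_vars (Var x) = {x}"
| "term_vars (Const c) = {}"

fun term_consts :: "fo_term \<Rightarrow> nat set" where
  "term_consts (Var x) = {}"
| "term_consts (Const c) = {c}"

fun fv :: "fo \<Rightarrow> nat set" where
  "fv (Atom R ts) = (\<Union>t\<in>set ts. term_vars t)"
| "fv (Eq s t) = term_vars s \<union> term_vars t"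
| "fv TT = {}"
| "fv FF = {}"
| "fv (Neg \<phi>) = fv \<phi>"
| "fv (Conj \<phi> \<psi>) = fv \<phi> \<union> fv \<psi>"
| "fv (Disj \<phi> \<psi>) = fv \<phi> \<union> fv \<psi>"
| "fv (Ex x \<phi>) = fv \<phi> - {x}"
| "fv (All x \<phi>) = fv \<phi> - {x}"

text \<open>adom of a formula: the constants occurring in it.\<close>
fun fo_consts :: "fo \<Rightarrow> nat set" where
  "fo_consts (Atom R ts) = (\<Union>t\<in>set ts. term_consts t)"
| "fo_consts (Eq s t) = term_consts s \<union> term_consts t"
| "fo_consts TT = {}"
| "fo_consts FF = {}"
| "fo_consts (Neg \<phi>) = fo_consts \<phi>"
| "fo_consts (Conj \<phi> \<psi>) = fo_consts \<phi> \<union> fo_consts \<psi>"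
| "fo_consts (Disj \<phi> \<psi>) = fo_consts \<phi> \<union> fo_consts \<psi>"
| "fo_consts (Ex x \<phi>) = fo_consts \<phi>"
| "fo_consts (All x \<phi>) = fo_consts \<phi>"

fun fo_over :: "nat set \<Rightarrow> (nat \<Rightarrow> nat) \<Rightarrow> fo \<Rightarrow> bool" where
  "fo_over S ar (Atom R ts) \<longleftrightarrow> R \<in> S \<and> length ts = ar R"
| "fo_over S ar (Eq s t) \<longleftrightarrow> True"
| "fo_over S ar TT \<longleftrightarrow> True"
| "fo_over S ar FF \<longleftrightarrow> True"
| "fo_over S ar (Neg \<phi>) \<longleftrightarrow> fo_over S ar \<phi>"
| "fo_over S ar (Conj \<phi> \<psi>) \<longleftrightarrow> fo_over S ar \<phi> \<and> fo_over S ar \<psi>"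
| "fo_over S ar (Disj \<phi> \<psi>) \<longleftrightarrow> fo_over S ar \<phi> \<and> fo_over S ar \<psi>"
| "fo_over S ar (Ex x \<phi>) \<longleftrightarrow> fo_over S ar \<phi>"
| "fo_over S ar (All x \<phi>) \<longleftrightarrow> fo_over S ar \<phi>"

fun sat :: "nat set \<Rightarrow> fact set \<Rightarrow> (nat \<Rightarrow> nat) \<Rightarrow> fo \<Rightarrow> bool" where
  "sat A D v (Atom R ts) \<longleftrightarrow> (R, map (term_val v) ts) \<in> D"
| "sat A D v (Eq s t) \<longleftrightarrow> term_val v s = term_val v t"
| "sat A D v TT \<longleftrightarrow> True"
| "sat A D v FF \<longleftrightarrow> False"
| "sat A D v (Neg \<phi>) \<longleftrightarrow> \<not> sat A D v \<phi>"
| "sat A D v (Conj \<phi> \<psi>) \<longleftrightarrow> sat A D v \<phi> \<and> sat A D v \<psi>"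
| "sat A D v (Disj \<phi> \<psi>) \<longleftrightarrow> sat A D v \<phi> \<or> sat A D v \<psi>"
| "sat A D v (Ex x \<phi>) \<longleftrightarrow> (\<exists>a\<in>A. sat A D (v(x := a)) \<phi>)"
| "sat A D v (All x \<phi>) \<longleftrightarrow> (\<forall>a\<in>A. sat A D (v(x := a)) \<phi>)"

text \<open>Assignment of a tuple to the free variables x_1,...,x_k, represented by the
  variables 0,...,k-1.\<close>
definition tuple_assign :: "nat list \<Rightarrow> nat \<Rightarrow> nat" where
  "tuple_assign as i = (if i < length as then as ! i else 0)"

definition adom_sat :: "fact set \<Rightarrow> fo \<Rightarrow> nat list \<Rightarrow> bool" where
  "adom_sat D \<phi> as \<longleftrightarrow> sat (adom D \<union> fo_consts \<phi>) D (tuple_assign as) \<phi>"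

text \<open>An FO-view from schema (Sin, arin) to schema (S, ar): one formula Phi_R per output
  symbol R, over the input schema, with free variables among x_1..x_ar(R) (i.e. 0..ar R - 1).\<close>
definition fo_view :: "nat set \<Rightarrow> (nat \<Rightarrow> nat) \<Rightarrow> nat set \<Rightarrow> (nat \<Rightarrow> nat) \<Rightarrow> (nat \<Rightarrow> fo) \<Rightarrow> bool" where
  "fo_view Sin arin S ar \<Phi> \<longleftrightarrow>
     (\<forall>R\<in>S. fo_over Sin arin (\<Phi> R) \<and> fv (\<Phi> R) \<subseteq> {..<ar R})"

definition apply_view :: "nat set \<Rightarrow> (nat \<Rightarrow> nat) \<Rightarrow> (nat \<Rightarrow> fo) \<Rightarrow> fact set \<Rightarrow> fact set" where
  "apply_view S ar \<Phi> D =
     {(R, as) | R as. R \<in> S \<and> length as = ar R \<and>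
        set as \<subseteq> adom D \<union> fo_consts (\<Phi> R) \<and> adom_sat D (\<Phi> R) as}"

definition in_FO_TI :: "nat set \<Rightarrow> (nat \<Rightarrow> nat) \<Rightarrow> fact set pmf \<Rightarrow> bool" where
  "in_FO_TI S ar \<D> \<longleftrightarrow>
     (\<exists>Sin arin I \<Phi>. schema Sin \<and> TI_PDB Sin arin I \<and> fo_view Sin arin S ar \<Phi> \<and>
        \<D> = map_pmf (apply_view S ar \<Phi>) I)"

end

theory Submission imports Defs "HOL-Library.Nat_Bijection" begin

lemma split_geom:
  fixes x :: real assumes "0 < x" "x < 1"
  shows "map_pmf (\<lambda>n. (odd n, n div 2)) (geometric_pmf (1 - x)) =
         pair_pmf (bernoulli_pmf (x / (1 + x))) (geometric_pmf (1 - x^2))"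
proof (rule pmf_eqI)
  fix bm :: "bool \<times> nat"
  obtain b m where bm: "bm = (b, m)" by (cases bm)
  define n where "n = 2 * m + (if b then 1 else 0)"
  have inj: "inj (\<lambda>n::nat. (odd n, n div 2))"
    by (rule injI) (metis div_mult_mod_eq odd_iff_mod_2_eq_one even_iff_mod_2_eq_zero prod.inject)
  have "bm = (\<lambda>n. (odd n, n div 2)) n" unfolding bm n_def by auto
  hence "pmf (map_pmf (\<lambda>n. (odd n, n div 2)) (geometric_pmf (1 - x))) bm = pmf (geometric_pmf (1 - x)) n"
    using pmf_map_inj'[OF inj] by simp
  also have "\<dots> = x ^ n * (1 - x)" using assms by (subst pmf_geometric) auto
  also have "\<dots> = pmf (pair_pmf (bernoulli_pmf (x / (1 + x))) (geometric_pmf (1 - x^2))) bm"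
  proof -
    have xb: "0 \<le> x / (1 + x)" "x / (1 + x) \<le> 1" using assms by auto
    have x2: "0 < 1 - x^2" "1 - x^2 \<le> 1" using assms by (auto simp: power_less_one_iff)
    have g: "pmf (geometric_pmf (1 - x^2)) m = (x^2)^m * (1 - x^2)"
      using x2 by (subst pmf_geometric) auto
    have p: "pmf (pair_pmf (bernoulli_pmf (x / (1 + x))) (geometric_pmf (1 - x^2))) bm =
        pmf (bernoulli_pmf (x / (1 + x))) b * ((x^2)^m * (1 - x^2))"
      unfolding bm pmf_pair g by simp
    have e: "1 - x^2 = (1 - x) * (1 + x)" by (simp add: algebra_simps power2_eq_square)
    have pos: "1 + x \<noteq> 0" using assms by auto
    show ?thesis
    proof (cases b)
      case True
      then show ?thesis unfolding p n_def using xb pos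
        by (simp add: e power_mult[symmetric])
    next
      case False
      then show ?thesis unfolding p n_def using xb pos
        by (simp add: e power_mult[symmetric] field_simps)
    qed
  qed
  finally show "pmf (map_pmf (\<lambda>n. (odd n, n div 2)) (geometric_pmf (1 - x))) bm = \<dots>" .
qed

lemma decode_sub_iff:
  "K \<subseteq> set_decode n \<longleftrightarrow> (0 \<in> K \<longrightarrow> odd n) \<and> Suc -` K \<subseteq> set_decode (n div 2)"
proof
  assume "K \<subseteq> set_decode n" thus "(0 \<in> K \<longrightarrow> odd n) \<and> Suc -` K \<subseteq> set_decode (n div 2)"
    by auto
next
  assume a: "(0 \<in> K \<longrightarrow> odd n) \<and> Suc -` K \<subseteq> set_decode (n div 2)"
  show "K \<subseteq> set_decode n"
  proof
    fix k assume k: "k \<in> K"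
    show "k \<in> set_decode n"
    proof (cases k)
      case 0 thus ?thesis using a k by simp
    next
      case (Suc j) thus ?thesis using a k by auto
    qed
  qed
qed

lemma indep_bits:
  "\<And>K x. K \<subseteq> {..<N} \<Longrightarrow> 0 < (x::real) \<Longrightarrow> x < 1 \<Longrightarrow>
    measure_pmf.prob (geometric_pmf (1 - x)) {n. K \<subseteq> set_decode n} =
    (\<Prod>k\<in>K. x ^ (2 ^ k) / (1 + x ^ (2 ^ k)))"
proof (induction N)
  case 0 then show ?case by simp
next
  case (Suc N)
  define K' where "K' = Suc -` K"
  have K': "K' \<subseteq> {..<N}" using Suc.prems(1) unfolding K'_def by auto
  have x2: "0 < x^2" "x^2 < (1::real)" using Suc.prems by (auto simp: power_less_one_iff)
  have set_eq: "{n. K \<subseteq> set_decode n} = (\<lambda>n. (odd n, n div 2)) -` ({b. 0 \<in> K \<longrightarrow> b} \<times> {m. K' \<subseteq> set_decode m})"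
    unfolding K'_def using decode_sub_iff[of K] by auto
  have "measure_pmf.prob (geometric_pmf (1 - x)) {n. K \<subseteq> set_decode n} =
     measure_pmf.prob (map_pmf (\<lambda>n. (odd n, n div 2)) (geometric_pmf (1 - x))) ({b. 0 \<in> K \<longrightarrow> b} \<times> {m. K' \<subseteq> set_decode m})"
    unfolding set_eq measure_map_pmf ..
  also have "\<dots> = measure_pmf.prob (bernoulli_pmf (x / (1 + x))) {b. 0 \<in> K \<longrightarrow> b} *
       measure_pmf.prob (geometric_pmf (1 - x^2)) {m. K' \<subseteq> set_decode m}"
    unfolding split_geom[OF Suc.prems(2,3)] by (rule measure_pmf_prob_product) auto
  also have "measure_pmf.prob (geometric_pmf (1 - x^2)) {m. K' \<subseteq> set_decode m} =
      (\<Prod>k\<in>K'. (x^2) ^ (2 ^ k) / (1 + (x^2) ^ (2 ^ k)))"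
    using Suc.IH[OF K' x2] .
  also have "\<dots> = (\<Prod>k\<in>K'. x ^ (2 ^ Suc k) / (1 + x ^ (2 ^ Suc k)))"
  proof (rule prod.cong[OF refl])
    fix k show "(x^2) ^ (2 ^ k) / (1 + (x^2) ^ (2 ^ k)) = x ^ (2 ^ Suc k) / (1 + x ^ (2 ^ Suc k))"
      by (simp only: power_mult[symmetric] power_Suc mult.commute)
  qed
  also have "\<dots> = (\<Prod>k\<in>Suc ` K'. x ^ (2 ^ k) / (1 + x ^ (2 ^ k)))"
    by (subst prod.reindex) auto
  also have "measure_pmf.prob (bernoulli_pmf (x / (1 + x))) {b. 0 \<in> K \<longrightarrow> b} =
     (if 0 \<in> K then x / (1 + x) else 1)"
  proof -
    have xb: "0 \<le> x / (1 + x)" "x / (1 + x) \<le> 1" using Suc.prems by auto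
    show ?thesis
    proof (cases "0 \<in> K")
      case True
      hence "{b. 0 \<in> K \<longrightarrow> b} = {True}" by auto
      thus ?thesis using True xb by (simp add: measure_pmf_single)
    next
      case False
      hence "{b. 0 \<in> K \<longrightarrow> b} = UNIV" by auto
      thus ?thesis using False by simp
    qed
  qed
  also have "(if 0 \<in> K then x / (1 + x) else 1) * (\<Prod>k\<in>Suc ` K'. x ^ (2 ^ k) / (1 + x ^ (2 ^ k)))
     = (\<Prod>k\<in>K. x ^ (2 ^ k) / (1 + x ^ (2 ^ k)))"
  proof -
    have fin: "finite K" using Suc.prems(1) finite_subset by blast
    have SK: "Suc ` K' = K - {0}"
    proof
      show "Suc ` K' \<subseteq> K - {0}" unfolding K'_def by auto
      show "K - {0} \<subseteq> Suc ` K'"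
      proof
        fix k assume "k \<in> K - {0}"
        then obtain j where "k = Suc j" "Suc j \<in> K" by (cases k) auto
        thus "k \<in> Suc ` K'" unfolding K'_def by auto
      qed
    qed
    show ?thesis
    proof (cases "0 \<in> K")
      case True
      have "(\<Prod>k\<in>K. x ^ (2 ^ k) / (1 + x ^ (2 ^ k))) = x ^ (2 ^ 0) / (1 + x ^ (2 ^ 0)) * (\<Prod>k\<in>K - {0}. x ^ (2 ^ k) / (1 + x ^ (2 ^ k)))"
        by (rule prod.remove[OF fin True])
      thus ?thesis using True SK by simp
    next
      case False
      hence "K - {0} = K" by auto
      thus ?thesis using False SK by simp
    qed
  qed
  finally show ?case .
qed

definition qb :: "nat \<Rightarrow> real" where "qb k = (1/2) ^ (2 ^ k) / (1 + (1/2) ^ (2 ^ k))"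

lemma indep_half: "finite K \<Longrightarrow>
    measure_pmf.prob (geometric_pmf (1/2)) {n. K \<subseteq> set_decode n} = (\<Prod>k\<in>K. qb k)"
proof -
  assume "finite K"
  then obtain N where "K \<subseteq> {..<N}" by (meson finite_nat_iff_bounded subsetI lessThan_iff)
  from indep_bits[OF this, of "1/2"] show ?thesis by (simp add: qb_def)
qed

definition TIenc :: "(nat \<Rightarrow> fact) \<Rightarrow> fact set pmf" where
  "TIenc enc = map_pmf (\<lambda>n. enc ` set_decode n) (geometric_pmf (1/2))"

lemma set_TIenc: "set_pmf (TIenc enc) = {enc ` B | B. finite B}"
proof -
  have "set_pmf (geometric_pmf (1/2)) = UNIV" by (rule set_pmf_geometric) auto
  moreover have "range set_decode = Collect finite"
    by (auto simp: image_iff) (metis set_encode_inverse)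
  ultimately show ?thesis unfolding TIenc_def
    by (auto simp: image_iff) (metis set_encode_inverse)
qed

lemma TI_TIenc:
  assumes inj: "inj enc"
  shows "tuple_independent (TIenc enc)"
  unfolding tuple_independent_def
proof (intro allI impI)
  fix fs :: "fact list" assume dist: "distinct fs"
  let ?P = "measure_pmf.prob (TIenc enc)"
  have pre: "?P {I. \<forall>f\<in>A. f \<in> I} = measure_pmf.prob (geometric_pmf (1/2)) {n. A \<subseteq> enc ` set_decode n}" for A
    unfolding TIenc_def measure_map_pmf by (rule arg_cong[where f="measure_pmf.prob _"]) auto
  show "?P {I. \<forall>f\<in>set fs. f \<in> I} = (\<Prod>f\<leftarrow>fs. ?P {I. f \<in> I})"
  proof (cases "set fs \<subseteq> range enc")
    case True
    have sub: "A \<subseteq> enc ` S \<longleftrightarrow> enc -` A \<subseteq> S" if "A \<subseteq> range enc" for A S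
  proof
    assume "A \<subseteq> enc ` S" thus "enc -` A \<subseteq> S" using inj by (auto simp: inj_eq)
  next
    assume a1: "enc -` A \<subseteq> S"
    note a = a1 that
    show "A \<subseteq> enc ` S"
    proof
      fix f assume "f \<in> A"
      then obtain k where "f = enc k" using a(2) by auto
      thus "f \<in> enc ` S" using a(1) \<open>f \<in> A\<close> by auto
    qed
  qed
    have single: "?P {I. f \<in> I} = qb (inv enc f)" if "f \<in> range enc" for f
    proof -
      have "?P {I. f \<in> I} = ?P {I. \<forall>g\<in>{f}. g \<in> I}" by simp
      also have "\<dots> = measure_pmf.prob (geometric_pmf (1/2)) {n. enc -` {f} \<subseteq> set_decode n}"
        unfolding pre using sub[of "{f}"] that by simp
      also have "enc -` {f} = {inv enc f}" using that inj by (auto simp: inj_eq)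
      finally show ?thesis using indep_half[of "{inv enc f}"] by simp
    qed
    have fin: "finite (enc -` set fs)" using inj by (simp add: finite_vimageI)
    have "?P {I. \<forall>f\<in>set fs. f \<in> I} = (\<Prod>k\<in>enc -` set fs. qb k)"
      unfolding pre using sub[OF True] indep_half[OF fin] by simp
    also have "enc -` set fs = inv enc ` set fs"
    proof
      show "enc -` set fs \<subseteq> inv enc ` set fs"
      proof
        fix x assume "x \<in> enc -` set fs"
        thus "x \<in> inv enc ` set fs" using inv_f_f[OF inj, of x] by (metis imageI vimageE)
      qed
      show "inv enc ` set fs \<subseteq> enc -` set fs"
      proof
        fix y assume "y \<in> inv enc ` set fs"
        then obtain f where f: "f \<in> set fs" "y = inv enc f" by auto
        then obtain k where "f = enc k" using True by auto
        thus "y \<in> enc -` set fs" using f inv_f_f[OF inj, of k] by simp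
      qed
    qed
    also have "(\<Prod>k\<in>inv enc ` set fs. qb k) = (\<Prod>f\<in>set fs. qb (inv enc f))"
      by (rule prod.reindex_cong[where l="inv enc"]) (use True in \<open>auto intro!: inj_on_inv_into\<close>)
    also have "\<dots> = (\<Prod>f\<leftarrow>fs. qb (inv enc f))" using dist by (rule prod.distinct_set_conv_list)
    also have "\<dots> = (\<Prod>f\<leftarrow>fs. ?P {I. f \<in> I})"
      by (rule arg_cong[where f=prod_list], rule map_cong[OF refl]) (use True single in \<open>metis subsetD\<close>)
    finally show ?thesis .
  next
    case False
    then obtain f where f: "f \<in> set fs" "f \<notin> range enc" by auto
    have "?P {I. f \<in> I} = 0" unfolding pre[of "{f}", simplified] using f(2)
      by (simp add: image_iff)
    hence "(\<Prod>f\<leftarrow>fs. ?P {I. f \<in> I}) = 0" using f(1) by (auto simp: prod_list_zero_iff)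
    moreover have "{n. set fs \<subseteq> enc ` set_decode n} = {}" using f by auto
    hence "?P {I. \<forall>f\<in>set fs. f \<in> I} = 0" unfolding pre by simp
    ultimately show ?thesis by simp
  qed
qed

lemma sat_foldr_Ex:
  "sat Ad D v (foldr Ex xs \<phi>) \<longleftrightarrow>
     (\<exists>g. (\<forall>x\<in>set xs. g x \<in> Ad) \<and> sat Ad D (\<lambda>y. if y \<in> set xs then g y else v y) \<phi>)"
proof (induction xs arbitrary: v)
  case Nil then show ?case by simp
next
  case (Cons x xs)
  show ?case
  proof
    assume "sat Ad D v (foldr Ex (x # xs) \<phi>)"
    then obtain a where a0: "a \<in> Ad" "sat Ad D (v(x := a)) (foldr Ex xs \<phi>)" by auto
    then obtain g where g0: "\<forall>y\<in>set xs. g y \<in> Ad"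
      "sat Ad D (\<lambda>y. if y \<in> set xs then g y else (v(x := a)) y) \<phi>"
      using Cons.IH[of "v(x := a)"] by blast
    note a = a0(1) g0
    define g' where "g' = (\<lambda>y. if y \<in> set xs then g y else a)"
    have "(\<lambda>y. if y \<in> set xs then g y else (v(x := a)) y) = (\<lambda>y. if y \<in> set (x # xs) then g' y else v y)"
      unfolding g'_def by (auto simp: fun_eq_iff)
    moreover have "\<forall>y\<in>set (x # xs). g' y \<in> Ad" using a unfolding g'_def by auto
    ultimately show "\<exists>g. (\<forall>x\<in>set (x # xs). g x \<in> Ad) \<and> sat Ad D (\<lambda>y. if y \<in> set (x # xs) then g y else v y) \<phi>"
      using a(3) by metis
  next
    assume "\<exists>g. (\<forall>y\<in>set (x # xs). g y \<in> Ad) \<and> sat Ad D (\<lambda>y. if y \<in> set (x # xs) then g y else v y) \<phi>"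
    then obtain g where g: "\<forall>y\<in>set (x # xs). g y \<in> Ad" "sat Ad D (\<lambda>y. if y \<in> set (x # xs) then g y else v y) \<phi>"
      by blast
    have eq: "(\<lambda>y. if y \<in> set xs then g y else (v(x := g x)) y) = (\<lambda>y. if y \<in> set (x # xs) then g y else v y)"
      by (auto simp: fun_eq_iff)
    have "sat Ad D (v(x := g x)) (foldr Ex xs \<phi>)" unfolding Cons.IH[of "v(x := g x)"]
      by (rule exI[of _ g]) (use g in \<open>simp only: eq\<close>, auto)
    thus "sat Ad D v (foldr Ex (x # xs) \<phi>)" using g by auto
  qed
qed

lemma fv_foldr_Ex: "fv (foldr Ex xs \<phi>) = fv \<phi> - set xs"
  by (induction xs) auto
lemma fv_foldr_Disj: "fv (foldr Disj xs \<phi>) = (\<Union>x\<in>set xs. fv x) \<union> fv \<phi>"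
  by (induction xs) auto
lemma fv_foldr_Conj: "fv (foldr Conj xs \<phi>) = (\<Union>x\<in>set xs. fv x) \<union> fv \<phi>"
  by (induction xs) auto
lemma consts_foldr_Disj: "fo_consts (foldr Disj xs \<phi>) = (\<Union>x\<in>set xs. fo_consts x) \<union> fo_consts \<phi>"
  by (induction xs) auto
lemma consts_foldr_Conj: "fo_consts (foldr Conj xs \<phi>) = (\<Union>x\<in>set xs. fo_consts x) \<union> fo_consts \<phi>"
  by (induction xs) auto
lemma over_foldr_Ex: "fo_over S ar (foldr Ex xs \<phi>) = fo_over S ar \<phi>"
  by (induction xs) auto
lemma over_foldr_Disj: "fo_over S ar (foldr Disj xs \<phi>) \<longleftrightarrow> (\<forall>x\<in>set xs. fo_over S ar x) \<and> fo_over S ar \<phi>"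
  by (induction xs) auto
lemma over_foldr_Conj: "fo_over S ar (foldr Conj xs \<phi>) \<longleftrightarrow> (\<forall>x\<in>set xs. fo_over S ar x) \<and> fo_over S ar \<phi>"
  by (induction xs) auto
lemma sat_foldr_Disj: "sat Ad D v (foldr Disj xs \<phi>) \<longleftrightarrow> (\<exists>x\<in>set xs. sat Ad D v x) \<or> sat Ad D v \<phi>"
  by (induction xs) auto
lemma sat_foldr_Conj: "sat Ad D v (foldr Conj xs \<phi>) \<longleftrightarrow> (\<forall>x\<in>set xs. sat Ad D v x) \<and> sat Ad D v \<phi>"
  by (induction xs) auto

definition linF :: "nat \<Rightarrow> fo" where
  "linF A = foldr Ex [Suc 0..<A+3] (Atom 2 (Var 1 # Var 0 # map Var [2..<A+3]))"
definition loutF :: "nat \<Rightarrow> fo" where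
  "loutF A = foldr Ex [Suc 0..<A+3] (Atom 2 (Var 0 # Var 1 # map Var [2..<A+3]))"

definition lin :: "nat \<Rightarrow> fact set \<Rightarrow> nat \<Rightarrow> bool" where
  "lin A W y \<longleftrightarrow> (\<exists>u p. length p = Suc A \<and> (2, u # y # p) \<in> W)"
definition lout :: "nat \<Rightarrow> fact set \<Rightarrow> nat \<Rightarrow> bool" where
  "lout A W y \<longleftrightarrow> (\<exists>u p. length p = Suc A \<and> (2, y # u # p) \<in> W)"

lemma adomI: "(r, xs) \<in> W \<Longrightarrow> a \<in> set xs \<Longrightarrow> a \<in> adom W"
  unfolding adom_def by force

lemma link_sem_aux:
  assumes "adom W \<subseteq> Ad"
    and that: "\<And>u p. P u p \<in> W \<Longrightarrow> u \<in> adom W \<and> set p \<subseteq> adom W"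
  shows "(\<exists>g. (\<forall>x\<in>set [Suc 0..<A+3]. g x \<in> Ad) \<and> P (g 1) (map g [2..<A+3]) \<in> W) \<longleftrightarrow>
         (\<exists>u p. length p = Suc A \<and> P u p \<in> W)"
proof
  assume "\<exists>g. (\<forall>x\<in>set [Suc 0..<A+3]. g x \<in> Ad) \<and> P (g 1) (map g [2..<A+3]) \<in> W"
  then obtain g where "P (g 1) (map g [2..<A+3]) \<in> W" by blast
  thus "\<exists>u p. length p = Suc A \<and> P u p \<in> W" by (intro exI[of _ "g 1"] exI[of _ "map g [2..<A+3]"]) auto
next
  assume "\<exists>u p. length p = Suc A \<and> P u p \<in> W"
  then obtain u p where up: "length p = Suc A" "P u p \<in> W" by blast
  define g where "g y = (if y = 1 then u else p ! (y - 2))" for y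
  have "map g [2..<A+3] = p" using up(1) by (intro nth_equalityI) (auto simp: g_def)
  moreover have "\<forall>x\<in>set [Suc 0..<A+3]. g x \<in> Ad"
  proof
    fix x assume x: "x \<in> set [Suc 0..<A+3]"
    have "u \<in> adom W" "set p \<subseteq> adom W" using that[OF up(2)] by auto
    thus "g x \<in> Ad" using x up(1) assms unfolding g_def by (auto simp: nth_mem subset_iff)
  qed
  ultimately show "\<exists>g. (\<forall>x\<in>set [Suc 0..<A+3]. g x \<in> Ad) \<and> P (g 1) (map g [2..<A+3]) \<in> W"
    using up(2) by (intro exI[of _ g]) (auto simp: g_def)
qed

lemma sat_linF: assumes "adom W \<subseteq> Ad" shows "sat Ad W v (linF A) \<longleftrightarrow> lin A W (v 0)"
proof -
  have m0: "term_val h \<circ> Var = h" for h by (simp add: fun_eq_iff)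
  have m: "map (\<lambda>y. if Suc 0 \<le> y \<and> y < A + 3 then g y else v y) [2..<A + 3] = map g [2..<A+3]" for g
    by (intro map_cong) auto
  have "sat Ad W v (linF A) \<longleftrightarrow> (\<exists>g. (\<forall>x\<in>set [Suc 0..<A+3]. g x \<in> Ad) \<and> (\<lambda>u p. (2::nat, u # v 0 # p)) (g 1) (map g [2..<A+3]) \<in> W)"
    unfolding linF_def sat_foldr_Ex by (simp add: m0 m)
  also have "\<dots> \<longleftrightarrow> (\<exists>u p. length p = Suc A \<and> (\<lambda>u p. (2::nat, u # v 0 # p)) u p \<in> W)"
    by (rule link_sem_aux[OF assms]) (auto intro: adomI)
  finally show ?thesis unfolding lin_def by simp
qed

lemma sat_loutF: assumes "adom W \<subseteq> Ad" shows "sat Ad W v (loutF A) \<longleftrightarrow> lout A W (v 0)"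
proof -
  have m0: "term_val h \<circ> Var = h" for h by (simp add: fun_eq_iff)
  have m: "map (\<lambda>y. if Suc 0 \<le> y \<and> y < A + 3 then g y else v y) [2..<A + 3] = map g [2..<A+3]" for g
    by (intro map_cong) auto
  have "sat Ad W v (loutF A) \<longleftrightarrow> (\<exists>g. (\<forall>x\<in>set [Suc 0..<A+3]. g x \<in> Ad) \<and> (\<lambda>u p. (2::nat, v 0 # u # p)) (g 1) (map g [2..<A+3]) \<in> W)"
    unfolding loutF_def sat_foldr_Ex by (simp add: m0 m)
  also have "\<dots> \<longleftrightarrow> (\<exists>u p. length p = Suc A \<and> (\<lambda>u p. (2::nat, v 0 # u # p)) u p \<in> W)"
    by (rule link_sem_aux[OF assms]) (auto intro: adomI)
  finally show ?thesis unfolding lout_def by simp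
qed

definition tagF :: "nat \<Rightarrow> fo" where
  "tagF A = Disj (Atom 0 [Var 0]) (Disj (Atom 1 [Var 0]) (Disj (linF A) (loutF A)))"
definition complF :: "nat \<Rightarrow> fo" where
  "complF A = Conj (Disj (Atom 0 [Var 0]) (linF A)) (Disj (Atom 1 [Var 0]) (loutF A))"
definition validF :: "nat \<Rightarrow> fo" where
  "validF A = Conj (Ex 0 (Atom 0 [Var 0]))
     (Conj (All 0 (All 1 (Disj (Neg (Conj (Atom 0 [Var 0]) (Atom 0 [Var 1]))) (Eq (Var 0) (Var 1)))))
           (All 0 (Disj (Neg (tagF A)) (complF A))))"

definition tagP :: "nat \<Rightarrow> fact set \<Rightarrow> nat \<Rightarrow> bool" where
  "tagP A W y \<longleftrightarrow> (0, [y]) \<in> W \<or> (1, [y]) \<in> W \<or> lin A W y \<or> lout A W y"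
definition complP :: "nat \<Rightarrow> fact set \<Rightarrow> nat \<Rightarrow> bool" where
  "complP A W y \<longleftrightarrow> ((0, [y]) \<in> W \<or> lin A W y) \<and> ((1, [y]) \<in> W \<or> lout A W y)"
definition validP :: "nat \<Rightarrow> fact set \<Rightarrow> bool" where
  "validP A W \<longleftrightarrow> (\<exists>x. (0, [x]) \<in> W) \<and> (\<forall>x x'. (0, [x]) \<in> W \<longrightarrow> (0, [x']) \<in> W \<longrightarrow> x = x')
      \<and> (\<forall>y. tagP A W y \<longrightarrow> complP A W y)"

lemma tagP_adom: "tagP A W y \<Longrightarrow> y \<in> adom W"
  unfolding tagP_def lin_def lout_def by (auto intro: adomI)

lemma sat_validF: assumes "adom W \<subseteq> Ad" shows "sat Ad W v (validF A) \<longleftrightarrow> validP A W"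
proof -
  have t: "sat Ad W v (tagF A) \<longleftrightarrow> tagP A W (v 0)" for v
    unfolding tagF_def tagP_def using sat_linF[OF assms] sat_loutF[OF assms] by simp
  have c: "sat Ad W v (complF A) \<longleftrightarrow> complP A W (v 0)" for v
    unfolding complF_def complP_def using sat_linF[OF assms] sat_loutF[OF assms] by simp
  have ad: "(0::nat, [x]) \<in> W \<Longrightarrow> x \<in> Ad" for x using assms adomI[of 0 "[x]" W x] by auto
  have 1: "sat Ad W v (Ex 0 (Atom 0 [Var 0])) \<longleftrightarrow> (\<exists>x. (0, [x]) \<in> W)"
    using ad by auto
  have 2: "sat Ad W v (All 0 (All 1 (Disj (Neg (Conj (Atom 0 [Var 0]) (Atom 0 [Var 1]))) (Eq (Var 0) (Var 1)))))
      \<longleftrightarrow> (\<forall>x x'. (0, [x]) \<in> W \<longrightarrow> (0, [x']) \<in> W \<longrightarrow> x = x')"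
    using ad by auto
  have 3: "sat Ad W v (All 0 (Disj (Neg (tagF A)) (complF A))) \<longleftrightarrow> (\<forall>y. tagP A W y \<longrightarrow> complP A W y)"
    using assms tagP_adom[of A W] by (auto simp: t c)
  show ?thesis unfolding validF_def validP_def using 1 2 3 by simp
qed

subsection \<open>Chain encoding\<close>

definition tg :: "nat \<Rightarrow> nat \<Rightarrow> nat" where "tg i k = prod_encode (i, k)"

lemma tg_eq[simp]: "tg i k = tg j l \<longleftrightarrow> i = j \<and> k = l"
  unfolding tg_def by (simp add: prod_encode_eq)

definition pl :: "nat \<Rightarrow> (nat \<Rightarrow> fact list) \<Rightarrow> nat \<Rightarrow> nat \<Rightarrow> nat list" where
  "pl A xs i k = fst (xs i ! k) # snd (xs i ! k) @ replicate (A - length (snd (xs i ! k))) 0"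

definition Ef :: "nat \<Rightarrow> (nat \<Rightarrow> fact list) \<Rightarrow> nat \<Rightarrow> fact set" where
  "Ef A xs i = {(0, [tg i 0]), (1, [tg i (length (xs i))])} \<union>
     {(2, tg i k # tg i (Suc k) # pl A xs i k) | k. k < length (xs i)}"

definition okA :: "nat \<Rightarrow> (nat \<Rightarrow> fact list) \<Rightarrow> bool" where
  "okA A xs \<longleftrightarrow> (\<forall>i k. k < length (xs i) \<longrightarrow> length (snd (xs i ! k)) \<le> A)"

lemma length_pl: "okA A xs \<Longrightarrow> k < length (xs i) \<Longrightarrow> length (pl A xs i k) = Suc A"
  unfolding okA_def pl_def by fastforce

lemma mem_Ef0: "(0, [x]) \<in> Ef A xs i \<longleftrightarrow> x = tg i 0"
  unfolding Ef_def by auto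
lemma mem_Ef1: "(1, [x]) \<in> Ef A xs i \<longleftrightarrow> x = tg i (length (xs i))"
  unfolding Ef_def by auto
lemma mem_Ef1': "(Suc 0, [x]) \<in> Ef A xs i \<longleftrightarrow> x = tg i (length (xs i))"
  using mem_Ef1 by simp
lemma mem_Ef2: "(2, u # y # p) \<in> Ef A xs i \<longleftrightarrow>
   (\<exists>k<length (xs i). u = tg i k \<and> y = tg i (Suc k) \<and> p = pl A xs i k)"
  unfolding Ef_def by auto
lemma mem_Ef: "f \<in> Ef A xs i \<longleftrightarrow> f = (0, [tg i 0]) \<or> f = (1, [tg i (length (xs i))]) \<or>
   (\<exists>k<length (xs i). f = (2, tg i k # tg i (Suc k) # pl A xs i k))"
  unfolding Ef_def by auto

lemma valid_Ef: assumes ok: "okA A xs" shows "validP A (Ef A xs i)"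
proof -
  let ?W = "Ef A xs i" and ?m = "length (xs i)"
  have tag: "tagP A ?W y \<Longrightarrow> \<exists>k\<le>?m. y = tg i k" for y
    unfolding tagP_def lin_def lout_def mem_Ef0 mem_Ef1 mem_Ef2
    by (auto intro: less_imp_le Suc_leI)
  have compl: "complP A ?W (tg i k)" if "k \<le> ?m" for k
  proof -
    have a: "(0, [tg i k]) \<in> ?W \<or> lin A ?W (tg i k)"
    proof (cases k)
      case 0 thus ?thesis by (simp add: mem_Ef0)
    next
      case (Suc j)
      hence "j < ?m" using that by simp
      hence "(2, tg i j # tg i k # pl A xs i j) \<in> ?W" "length (pl A xs i j) = Suc A"
        using Suc length_pl[OF ok] by (auto simp: mem_Ef2)
      thus ?thesis unfolding lin_def by blast
    qed
    have b: "(1, [tg i k]) \<in> ?W \<or> lout A ?W (tg i k)"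
    proof (cases "k = ?m")
      case True thus ?thesis by (simp add: mem_Ef1 mem_Ef1')
    next
      case False
      hence "k < ?m" using that by simp
      hence "(2, tg i k # tg i (Suc k) # pl A xs i k) \<in> ?W" "length (pl A xs i k) = Suc A"
        using length_pl[OF ok] by (auto simp: mem_Ef2)
      thus ?thesis unfolding lout_def by blast
    qed
    show ?thesis using a b unfolding complP_def by blast
  qed
  show ?thesis unfolding validP_def
    using tag compl by (auto simp: mem_Ef0)
qed

lemma valid_imp:
  assumes ok: "okA A xs" and sub: "W \<subseteq> (\<Union>i. Ef A xs i)" and v: "validP A W"
  shows "\<exists>i. W = Ef A xs i"
proof -
  obtain x where x: "(0, [x]) \<in> W" using v unfolding validP_def by blast
  then obtain i where "(0, [x]) \<in> Ef A xs i" using sub by blast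
  hence xi: "x = tg i 0" by (simp add: mem_Ef0)
  have uniq: "(0, [y]) \<in> W \<Longrightarrow> y = x" for y using v x unfolding validP_def by blast
  have tc: "tagP A W y \<Longrightarrow> complP A W y" for y using v unfolding validP_def by blast
  let ?m = "length (xs i)"
  have fwd: "k \<le> ?m \<Longrightarrow> tagP A W (tg i k) \<and> (\<forall>j<k. (2, tg i j # tg i (Suc j) # pl A xs i j) \<in> W)" for k
  proof (induction k)
    case 0 thus ?case using x xi unfolding tagP_def by simp
  next
    case (Suc k)
    hence IH: "tagP A W (tg i k)" "\<forall>j<k. (2, tg i j # tg i (Suc j) # pl A xs i j) \<in> W" by auto
    have "(1, [tg i k]) \<in> W \<or> lout A W (tg i k)" using tc[OF IH(1)] unfolding complP_def by blast
    moreover have "(1, [tg i k]) \<notin> W"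
    proof
      assume "(1, [tg i k]) \<in> W"
      then obtain j where "(1, [tg i k]) \<in> Ef A xs j" using sub by blast
      thus False using Suc.prems by (simp add: mem_Ef1 mem_Ef1')
    qed
    ultimately obtain u p where up: "(2, tg i k # u # p) \<in> W" unfolding lout_def by blast
    then obtain j where "(2, tg i k # u # p) \<in> Ef A xs j" using sub by blast
    then obtain k' where k': "k' < length (xs j)" "tg i k = tg j k'" "u = tg j (Suc k')" "p = pl A xs j k'"
      by (auto simp: mem_Ef2)
    hence e: "j = i" "k' = k" by auto
    have "u = tg i (Suc k)" "p = pl A xs i k" using k'(3,4) e by simp_all
    hence l: "(2, tg i k # tg i (Suc k) # pl A xs i k) \<in> W" using up by simp
    moreover have "tagP A W (tg i (Suc k))" unfolding tagP_def lin_def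
      using l length_pl[OF ok, of k i] Suc.prems by auto
    ultimately show ?case using IH(2) less_Suc_eq by auto
  qed
  have bwd: "\<And>j. tagP A W (tg j k) \<Longrightarrow> (0, [tg j 0]) \<in> W" for k
  proof (induction k)
    case 0
    have "(0, [tg j 0]) \<in> W \<or> lin A W (tg j 0)" using tc[OF 0] unfolding complP_def by blast
    moreover have "\<not> lin A W (tg j 0)"
    proof
      assume "lin A W (tg j 0)"
      then obtain u p where "(2, u # tg j 0 # p) \<in> W" unfolding lin_def by blast
      then obtain j' where "(2, u # tg j 0 # p) \<in> Ef A xs j'" using sub by blast
      thus False by (auto simp: mem_Ef2)
    qed
    ultimately show ?case by blast
  next
    case (Suc k)
    have "(0, [tg j (Suc k)]) \<in> W \<or> lin A W (tg j (Suc k))" using tc[OF Suc.prems] unfolding complP_def by blast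
    moreover have "(0, [tg j (Suc k)]) \<notin> W"
    proof
      assume "(0, [tg j (Suc k)]) \<in> W"
      then obtain j' where "(0, [tg j (Suc k)]) \<in> Ef A xs j'" using sub by blast
      thus False by (simp add: mem_Ef0)
    qed
    ultimately obtain u p where up: "(2, u # tg j (Suc k) # p) \<in> W" unfolding lin_def by blast
    then obtain j' where "(2, u # tg j (Suc k) # p) \<in> Ef A xs j'" using sub by blast
    then obtain k' where k': "k' < length (xs j')" "u = tg j' k'" "tg j (Suc k) = tg j' (Suc k')" "p = pl A xs j' k'"
      by (auto simp: mem_Ef2)
    hence e: "j' = j" "k' = k" by auto
    have "u = tg j k" "p = pl A xs j k" using k'(2,4) e by simp_all
    hence "(2, tg j k # tg j (Suc k) # pl A xs j k) \<in> W" using up by simp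
    hence "tagP A W (tg j k)" unfolding tagP_def lout_def
      using length_pl[OF ok, of k j] k'(1) e by blast
    thus ?case by (rule Suc.IH)
  qed
  have "Ef A xs i \<subseteq> W"
  proof
    fix f assume f: "f \<in> Ef A xs i"
    have F: "tagP A W (tg i ?m)" "\<forall>j<?m. (2, tg i j # tg i (Suc j) # pl A xs i j) \<in> W"
      using fwd[of ?m] by auto
    have "(1, [tg i ?m]) \<in> W \<or> lout A W (tg i ?m)" using tc[OF F(1)] unfolding complP_def by blast
    moreover have "\<not> lout A W (tg i ?m)"
    proof
      assume "lout A W (tg i ?m)"
      then obtain u p where "(2, tg i ?m # u # p) \<in> W" unfolding lout_def by blast
      then obtain j' where "(2, tg i ?m # u # p) \<in> Ef A xs j'" using sub by blast
      thus False by (auto simp: mem_Ef2)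
    qed
    ultimately have "(1, [tg i ?m]) \<in> W" by blast
    thus "f \<in> W" using f F(2) x xi unfolding mem_Ef by auto
  qed
  moreover have "W \<subseteq> Ef A xs i"
  proof
    fix f assume fW: "f \<in> W"
    then obtain j where fj: "f \<in> Ef A xs j" using sub by blast
    have "(0, [tg j 0]) \<in> W"
    proof -
      consider "f = (0, [tg j 0])" | "f = (1, [tg j (length (xs j))])"
        | k where "k < length (xs j)" "f = (2, tg j k # tg j (Suc k) # pl A xs j k)"
        using fj unfolding mem_Ef by blast
      thus ?thesis
      proof cases
        case 1 thus ?thesis using fW by simp
      next
        case 2
        hence "tagP A W (tg j (length (xs j)))" using fW unfolding tagP_def by simp
        thus ?thesis by (rule bwd)
      next
        case (3 k)
        hence "tagP A W (tg j k)" using fW length_pl[OF ok, of k j] unfolding tagP_def lout_def by auto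
        thus ?thesis by (rule bwd)
      qed
    qed
    hence "j = i" using uniq xi by fastforce
    thus "f \<in> Ef A xs i" using fj by simp
  qed
  ultimately show ?thesis by blast
qed

definition mainF :: "nat \<Rightarrow> nat \<Rightarrow> nat \<Rightarrow> fo" where
  "mainF A R r = Ex A (Ex (Suc A) (Atom 2 (Var A # Var (Suc A) # Const R #
      map Var [0..<r] @ replicate (A - r) (Const 0))))"
definition tupF :: "nat list \<Rightarrow> fo" where
  "tupF as = foldr Conj (map (\<lambda>j. Eq (Var j) (Const (as ! j))) [0..<length as]) TT"
definition d0F :: "fact list \<Rightarrow> nat \<Rightarrow> fo" where
  "d0F d0 R = foldr Disj (map (\<lambda>(R', as). if R' = R then tupF as else FF) d0) FF"
definition PhiF :: "nat \<Rightarrow> (nat \<Rightarrow> nat) \<Rightarrow> fact list \<Rightarrow> nat \<Rightarrow> fo" where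
  "PhiF A ar d0 R = Disj (Conj (validF A) (mainF A R (ar R))) (Conj (Neg (validF A)) (d0F d0 R))"

lemma sat_tupF: "sat Ad W v (tupF as) \<longleftrightarrow> (\<forall>j<length as. v j = as ! j)"
  unfolding tupF_def sat_foldr_Conj by auto

lemma sat_d0F: "sat Ad W v (d0F d0 R) \<longleftrightarrow> (\<exists>as. (R, as) \<in> set d0 \<and> (\<forall>j<length as. v j = as ! j))"
proof
  assume "sat Ad W v (d0F d0 R)"
  thus "\<exists>as. (R, as) \<in> set d0 \<and> (\<forall>j<length as. v j = as ! j)"
    unfolding d0F_def sat_foldr_Disj by (auto simp: sat_tupF split: if_splits)
next
  assume "\<exists>as. (R, as) \<in> set d0 \<and> (\<forall>j<length as. v j = as ! j)"
  then obtain as where as: "(R, as) \<in> set d0" "\<forall>j<length as. v j = as ! j" by blast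
  show "sat Ad W v (d0F d0 R)"
    unfolding d0F_def sat_foldr_Disj by (rule disjI1, rule bexI[of _ "tupF as"]) (use as in \<open>auto simp: sat_tupF image_iff intro!: bexI[of _ "(R, as)"]\<close>)
qed

lemma consts_d0F: "(R, as) \<in> set d0 \<Longrightarrow> set as \<subseteq> fo_consts (d0F d0 R)"
proof -
  assume a: "(R, as) \<in> set d0"
  have "fo_consts (tupF as) = set as"
    unfolding tupF_def consts_foldr_Conj by (force simp: in_set_conv_nth)
  moreover have "fo_consts (tupF as) \<subseteq> fo_consts (d0F d0 R)"
    unfolding d0F_def consts_foldr_Disj using a by force
  ultimately show ?thesis by simp
qed

lemma sat_mainF:
  assumes "adom W \<subseteq> Ad" "r \<le> A" "length bs = r"
  shows "sat Ad W (tuple_assign bs) (mainF A R r) \<longleftrightarrow>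
     (\<exists>u w. (2, u # w # R # bs @ replicate (A - r) 0) \<in> W)"
proof -
  have m: "map (term_val ((tuple_assign bs)(A := a, Suc A := b))) (map Var [0..<r] @ replicate (A - r) (Const 0))
      = bs @ replicate (A - r) 0" for a b
  proof -
    have "map (term_val ((tuple_assign bs)(A := a, Suc A := b))) (map Var [0..<r]) = bs"
      using assms(2,3) by (intro nth_equalityI) (auto simp: tuple_assign_def)
    thus ?thesis by simp
  qed
  have "sat Ad W (tuple_assign bs) (mainF A R r) \<longleftrightarrow>
     (\<exists>a\<in>Ad. \<exists>b\<in>Ad. (2, a # b # R # bs @ replicate (A - r) 0) \<in> W)"
    unfolding mainF_def using m by simp
  also have "\<dots> \<longleftrightarrow> (\<exists>u w. (2, u # w # R # bs @ replicate (A - r) 0) \<in> W)"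
    using assms(1) adomI[of 2 _ W] by (auto simp del: One_nat_def) (meson list.set_intros subsetD)
  finally show ?thesis .
qed

lemma apply_view_PhiF:
  assumes arA: "\<forall>R\<in>S. ar R \<le> A" and d0: "\<forall>f\<in>set d0. fact_over S ar f"
  shows "apply_view S ar (PhiF A ar d0) W = (if validP A W then
     {(R, bs). R \<in> S \<and> length bs = ar R \<and> (\<exists>u w. (2, u # w # R # bs @ replicate (A - ar R) 0) \<in> W)}
     else set d0)"
proof -
  have key: "(R \<in> S \<and> length bs = ar R \<and> set bs \<subseteq> adom W \<union> fo_consts (PhiF A ar d0 R) \<and>
         adom_sat W (PhiF A ar d0 R) bs) \<longleftrightarrow>
       (if validP A W then R \<in> S \<and> length bs = ar R \<and> (\<exists>u w. (2, u # w # R # bs @ replicate (A - ar R) 0) \<in> W)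
        else (R, bs) \<in> set d0)" for R bs
  proof (cases "R \<in> S \<and> length bs = ar R")
    case False
    moreover have "(R, bs) \<notin> set d0" using False d0 unfolding fact_over_def by auto
    ultimately show ?thesis by auto
  next
    case True
    let ?Ad = "adom W \<union> fo_consts (PhiF A ar d0 R)"
    have sub: "adom W \<subseteq> ?Ad" by blast
    have sv: "sat ?Ad W v (validF A) \<longleftrightarrow> validP A W" for v using sat_validF[OF sub] .
    have sm: "sat ?Ad W (tuple_assign bs) (mainF A R (ar R)) \<longleftrightarrow>
       (\<exists>u w. (2, u # w # R # bs @ replicate (A - ar R) 0) \<in> W)"
      using sat_mainF[OF sub] True arA by auto
    have sd: "sat ?Ad W (tuple_assign bs) (d0F d0 R) \<longleftrightarrow> (R, bs) \<in> set d0"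
    proof -
      have "(\<forall>j<length as. tuple_assign bs j = as ! j) \<longleftrightarrow> bs = as" if "(R, as) \<in> set d0" for as
      proof -
        have "length as = ar R" using that d0 unfolding fact_over_def by auto
        hence "length as = length bs" using True by simp
        thus ?thesis by (auto simp: tuple_assign_def intro: nth_equalityI)
      qed
      thus ?thesis unfolding sat_d0F by auto
    qed
    show ?thesis
    proof (cases "validP A W")
      case v: True
      have "(\<exists>u w. (2, u # w # R # bs @ replicate (A - ar R) 0) \<in> W) \<Longrightarrow> set bs \<subseteq> adom W"
        by (auto intro: adomI)
      thus ?thesis using v True sv sm unfolding adom_sat_def PhiF_def by auto
    next
      case v: False
      have "(R, bs) \<in> set d0 \<Longrightarrow> set bs \<subseteq> fo_consts (PhiF A ar d0 R)"
        using consts_d0F[of R bs d0] unfolding PhiF_def by auto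
      thus ?thesis using v True sv sd unfolding adom_sat_def PhiF_def by auto
    qed
  qed
  show ?thesis unfolding apply_view_def using key by (auto split: if_splits)
qed

lemma out_Ef:
  assumes ov: "\<forall>f\<in>set (xs i). fact_over S ar f"
  shows "{(R, bs). R \<in> S \<and> length bs = ar R \<and> (\<exists>u w. (2, u # w # R # bs @ replicate (A - ar R) 0) \<in> Ef A xs i)}
     = set (xs i)"
proof -
  have "(R \<in> S \<and> length bs = ar R \<and> (\<exists>u w. (2, u # w # R # bs @ replicate (A - ar R) 0) \<in> Ef A xs i))
     \<longleftrightarrow> (R, bs) \<in> set (xs i)" for R bs
  proof
    assume a: "R \<in> S \<and> length bs = ar R \<and> (\<exists>u w. (2, u # w # R # bs @ replicate (A - ar R) 0) \<in> Ef A xs i)"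
    then obtain k where k: "k < length (xs i)" "R # bs @ replicate (A - ar R) 0 = pl A xs i k"
      unfolding mem_Ef2 by blast
    obtain R' as where x: "xs i ! k = (R', as)" by (cases "xs i ! k")
    have "(R', as) \<in> set (xs i)" using k(1) x by (metis nth_mem)
    hence las: "length as = ar R'" using ov unfolding fact_over_def by auto
    have "R = R'" "bs @ replicate (A - ar R) 0 = as @ replicate (A - length as) 0"
      using k(2) x unfolding pl_def by auto
    hence "bs = as" using las a by simp
    thus "(R, bs) \<in> set (xs i)" using \<open>R = R'\<close> \<open>(R', as) \<in> set (xs i)\<close> by simp
  next
    assume a: "(R, bs) \<in> set (xs i)"
    then obtain k where k: "k < length (xs i)" "xs i ! k = (R, bs)" by (auto simp: in_set_conv_nth)
    have o: "R \<in> S" "length bs = ar R" using ov a unfolding fact_over_def by auto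
    have "pl A xs i k = R # bs @ replicate (A - ar R) 0" unfolding pl_def using k o by simp
    hence "(2, tg i k # tg i (Suc k) # R # bs @ replicate (A - ar R) 0) \<in> Ef A xs i"
      using k mem_Ef2 by metis
    thus "R \<in> S \<and> length bs = ar R \<and> (\<exists>u w. (2, u # w # R # bs @ replicate (A - ar R) 0) \<in> Ef A xs i)"
      using o by blast
  qed
  thus ?thesis by auto
qed

lemma fv_linF: "fv (linF A) \<subseteq> {0}" by (auto simp: linF_def fv_foldr_Ex)
lemma fv_loutF: "fv (loutF A) \<subseteq> {0}" by (auto simp: loutF_def fv_foldr_Ex)
lemma fv_validF: "fv (validF A) = {}"
  using fv_linF[of A] fv_loutF[of A] by (auto simp: validF_def tagF_def complF_def)

lemma over_validF: "fo_over {0, 1, 2} (\<lambda>r. if r = 2 then A + 3 else 1) (validF A)"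
  by (simp add: validF_def tagF_def complF_def linF_def loutF_def over_foldr_Ex)

lemma fo_view_PhiF:
  assumes arA: "\<forall>R\<in>S. ar R \<le> A" and d0: "\<forall>f\<in>set d0. fact_over S ar f"
  shows "fo_view {0, 1, 2} (\<lambda>r. if r = 2 then A + 3 else 1) S ar (PhiF A ar d0)"
  unfolding fo_view_def
proof
  fix R assume R: "R \<in> S"
  have "fo_over {0, 1, 2} (\<lambda>r. if r = 2 then A + 3 else 1) (mainF A R (ar R))"
    using arA R by (simp add: mainF_def)
  moreover have "fo_over {0, 1, 2} (\<lambda>r. if r = 2 then A + 3 else 1) (d0F d0 R)"
    by (auto simp: d0F_def over_foldr_Disj tupF_def over_foldr_Conj split: prod.splits)
  moreover have "fv (mainF A R (ar R)) \<subseteq> {..<ar R}" by (auto simp: mainF_def)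
  moreover have "fv (d0F d0 R) \<subseteq> {..<ar R}"
  proof -
    have "fv (tupF as) \<subseteq> {..<ar R}" if "(R, as) \<in> set d0" for as
    proof -
      have "length as = ar R" using that d0 unfolding fact_over_def by auto
      thus ?thesis by (auto simp: tupF_def fv_foldr_Conj)
    qed
    thus ?thesis by (fastforce simp: d0F_def fv_foldr_Disj split: if_splits)
  qed
  ultimately show "fo_over {0, 1, 2} (\<lambda>r. if r = 2 then A + 3 else 1) (PhiF A ar d0 R) \<and>
      fv (PhiF A ar d0 R) \<subseteq> {..<ar R}"
    using over_validF[of A] fv_validF[of A] by (auto simp: PhiF_def)
qed

theorem lemma6p6:
  fixes S :: "nat set" and ar :: "nat \<Rightarrow> nat" and DD :: "fact set set"
  assumes "schema S"
    and "DD \<noteq> {}"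
    and "\<forall>D\<in>DD. is_instance S ar D"
  shows "\<exists>\<D>. in_FO_TI S ar \<D> \<and> worlds \<D> = DD"
proof -
  have finS: "finite S" "S \<noteq> {}" using assms(1) unfolding schema_def by auto
  define A where "A = Max (ar ` S)"
  have arA: "\<forall>R\<in>S. ar R \<le> A" unfolding A_def using finS by auto
  have cDD: "countable DD"
    by (rule countable_subset[OF _ countable_Collect_finite]) (use assms(3) in \<open>auto simp: is_instance_def\<close>)
  define D where "D = from_nat_into DD"
  have DDD: "range D = DD" unfolding D_def using assms(2) cDD by simp
  have Din: "D i \<in> DD" for i using DDD by auto
  define xs where "xs i = (SOME l. distinct l \<and> set l = D i)" for i
  have xs: "distinct (xs i) \<and> set (xs i) = D i" for i
  proof -
    have "finite (D i)" using Din assms(3) unfolding is_instance_def by auto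
    then obtain l where "set l = D i \<and> distinct l" using finite_distinct_list by blast
    thus ?thesis unfolding xs_def by (metis (mono_tags, lifting) someI_ex)
  qed
  have ov: "\<forall>f\<in>set (xs i). fact_over S ar f" for i
    using xs[of i] Din[of i] assms(3) unfolding is_instance_def by auto
  have ok: "okA A xs" unfolding okA_def
  proof (intro allI impI)
    fix i k assume "k < length (xs i)"
    hence "fact_over S ar (xs i ! k)" using ov[of i] nth_mem by blast
    thus "length (snd (xs i ! k)) \<le> A" using arA unfolding fact_over_def by auto
  qed
  define F where "F = (\<Union>i. Ef A xs i)"
  have finE: "finite (Ef A xs i)" for i
  proof -
    have "{(2::nat, tg i k # tg i (Suc k) # pl A xs i k) | k. k < length (xs i)} =
        (\<lambda>k. (2, tg i k # tg i (Suc k) # pl A xs i k)) ` {..<length (xs i)}" by auto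
    thus ?thesis unfolding Ef_def by simp
  qed
  have cF: "countable F" unfolding F_def using finE by (simp add: countable_finite)
  have iF: "infinite F"
  proof
    assume "finite F"
    moreover have "range (\<lambda>i. (0::nat, [tg i 0])) \<subseteq> F" unfolding F_def by (auto simp: mem_Ef0)
    moreover have "inj (\<lambda>i. (0::nat, [tg i 0]))" by (rule injI) simp
    ultimately show False using finite_subset range_inj_infinite by metis
  qed
  define enc where "enc = from_nat_into F"
  have bij: "bij_betw enc UNIV F" unfolding enc_def by (rule bij_betw_from_nat_into[OF cF iF])
  have inj: "inj enc" and renc: "range enc = F" using bij by (auto simp: bij_betw_def)
  define Sin :: "nat set" where "Sin = {0, 1, 2}"
  define arin :: "nat \<Rightarrow> nat" where "arin = (\<lambda>r. if r = 2 then A + 3 else 1)"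
  define I where "I = TIenc enc"
  have setI: "set_pmf I = {W. W \<subseteq> F \<and> finite W}"
  proof -
    have "{enc ` B | B. finite B} = {W. W \<subseteq> F \<and> finite W}"
    proof (intro equalityI subsetI)
      fix W assume "W \<in> {enc ` B | B. finite B}"
      thus "W \<in> {W. W \<subseteq> F \<and> finite W}" using renc by auto
    next
      fix W assume W: "W \<in> {W. W \<subseteq> F \<and> finite W}"
      have "W = enc ` (enc -` W)" using W renc by auto
      moreover have "finite (enc -` W)" using W inj by (simp add: finite_vimageI)
      ultimately show "W \<in> {enc ` B | B. finite B}" by blast
    qed
    thus ?thesis unfolding I_def set_TIenc .
  qed
  have factF: "fact_over Sin arin f" if fF: "f \<in> F" for f
  proof -
    obtain i where "f \<in> Ef A xs i" using fF unfolding F_def by blast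
    then consider "f = (0, [tg i 0])" | "f = (1, [tg i (length (xs i))])"
        | k where "k < length (xs i)" "f = (2, tg i k # tg i (Suc k) # pl A xs i k)"
      unfolding mem_Ef by blast
    thus ?thesis
    proof cases
      case 3 thus ?thesis using length_pl[OF ok 3(1)] by (simp add: fact_over_def Sin_def arin_def)
    qed (auto simp: fact_over_def Sin_def arin_def)
  qed
  have TI: "TI_PDB Sin arin I"
    unfolding TI_PDB_def PDB_def
  proof
    show "\<forall>W\<in>set_pmf I. is_instance Sin arin W" using setI factF by (auto simp: is_instance_def)
    show "tuple_independent I" unfolding I_def by (rule TI_TIenc[OF inj])
  qed
  have sch: "schema Sin" unfolding schema_def Sin_def by simp
  have d0: "\<forall>f\<in>set (xs 0). fact_over S ar f" using ov by blast
  have view: "fo_view Sin arin S ar (PhiF A ar (xs 0))"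
    unfolding Sin_def arin_def by (rule fo_view_PhiF[OF arA d0])
  have avE: "apply_view S ar (PhiF A ar (xs 0)) (Ef A xs i) = D i" for i
    using apply_view_PhiF[OF arA d0, of "Ef A xs i"] valid_Ef[OF ok, of i] out_Ef[where xs=xs and i=i and S=S and ar=ar and A=A, OF ov[of i]] xs[of i]
    by simp
  have wl: "apply_view S ar (PhiF A ar (xs 0)) ` set_pmf I = DD"
  proof (intro equalityI subsetI)
    fix X assume "X \<in> apply_view S ar (PhiF A ar (xs 0)) ` set_pmf I"
    then obtain W where W: "W \<subseteq> F" "X = apply_view S ar (PhiF A ar (xs 0)) W" using setI by auto
    show "X \<in> DD"
    proof (cases "validP A W")
      case True
      then obtain i where "W = Ef A xs i" using valid_imp[OF ok] W(1) unfolding F_def by blast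
      thus ?thesis using W(2) avE Din by simp
    next
      case False
      thus ?thesis using W(2) apply_view_PhiF[OF arA d0, of W] xs[of 0] Din[of 0] by simp
    qed
  next
    fix X assume "X \<in> DD"
    then obtain i where "X = D i" using DDD by auto
    moreover have "Ef A xs i \<in> set_pmf I" using setI finE unfolding F_def by auto
    ultimately show "X \<in> apply_view S ar (PhiF A ar (xs 0)) ` set_pmf I" using avE by (metis imageI)
  qed
  have "in_FO_TI S ar (map_pmf (apply_view S ar (PhiF A ar (xs 0))) I)"
    unfolding in_FO_TI_def using sch TI view by blast
  moreover have "worlds (map_pmf (apply_view S ar (PhiF A ar (xs 0))) I) = DD"
    unfolding worlds_def using wl by simp
  ultimately show ?thesis by blast
qed

end
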